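(* Let $G$ be a graph, $v$ a vertex of $G$, and let $G^v$ be the graph obtained from $G$ by adding a new vertex $v'$ with $N(v')=N(v)$. Then $G\in$ CBU if and only if $G^v\in$ CBU. Furthermore, if $G$ belongs to $d$-CBU then $G^v$ belongs to $(d+1)$-CBU.
   Context: Let $e_1,\ldots,e_d$ be the standard basis of $\mathbb{R}^d$. For $d\ge 1$, a graph belongs to $d$-CBU if one can assign to each vertex an axis-parallel box (product of $d$ closed intervals of positive length) in $\mathbb{R}^d$ such that the boxes have pairwise disjoint interiors, two distinct vertices are adjacent iff their boxes intersect, and any two intersecting boxes intersect in a $(d-1)$-dimensional box orthogonal to $e_1$. CBU is the union of the classes $d$-CBU over all $d\ge1$. *)

theory Defs
  imports Complex_Main
begin

text \<open>Points of R^d are modelled as functions nat => real that vanish at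
coordinates >= d; coordinate 0 corresponds to the basis vector e_1.\<close>

definition box_set :: "nat \<Rightarrow> (nat \<Rightarrow> real) \<Rightarrow> (nat \<Rightarrow> real) \<Rightarrow> (nat \<Rightarrow> real) set" where
  "box_set d lo hi = {x. (\<forall>i<d. lo i \<le> x i \<and> x i \<le> hi i) \<and> (\<forall>i\<ge>d. x i = 0)}"

definition box_interior :: "nat \<Rightarrow> (nat \<Rightarrow> real) \<Rightarrow> (nat \<Rightarrow> real) \<Rightarrow> (nat \<Rightarrow> real) set" where
  "box_interior d lo hi = {x. (\<forall>i<d. lo i < x i \<and> x i < hi i) \<and> (\<forall>i\<ge>d. x i = 0)}"

definition orth_facet :: "nat \<Rightarrow> (nat \<Rightarrow> real) set \<Rightarrow> bool" where
  "orth_facet d S \<longleftrightarrow> (\<exists>c a b. (\<forall>i. 1 \<le> i \<and> i < d \<longrightarrow> a i < b i) \<and>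
     S = {x. x 0 = c \<and> (\<forall>i. 1 \<le> i \<and> i < d \<longrightarrow> a i \<le> x i \<and> x i \<le> b i) \<and> (\<forall>i\<ge>d. x i = 0)})"

definition dCBU :: "nat \<Rightarrow> 'a set \<Rightarrow> ('a \<Rightarrow> 'a \<Rightarrow> bool) \<Rightarrow> bool" where
  "dCBU d V E \<longleftrightarrow> 1 \<le> d \<and> (\<exists>lo hi :: 'a \<Rightarrow> nat \<Rightarrow> real.
     (\<forall>u\<in>V. \<forall>i<d. lo u i < hi u i) \<and>
     (\<forall>u\<in>V. \<forall>w\<in>V. u \<noteq> w \<longrightarrow>
        box_interior d (lo u) (hi u) \<inter> box_interior d (lo w) (hi w) = {} \<and>
        (E u w \<longleftrightarrow> box_set d (lo u) (hi u) \<inter> box_set d (lo w) (hi w) \<noteq> {}) \<and>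
        (box_set d (lo u) (hi u) \<inter> box_set d (lo w) (hi w) \<noteq> {} \<longrightarrow>
           orth_facet d (box_set d (lo u) (hi u) \<inter> box_set d (lo w) (hi w)))))"

definition CBU :: "'a set \<Rightarrow> ('a \<Rightarrow> 'a \<Rightarrow> bool) \<Rightarrow> bool" where
  "CBU V E \<longleftrightarrow> (\<exists>d\<ge>1. dCBU d V E)"

definition simple_graph :: "'a set \<Rightarrow> ('a \<Rightarrow> 'a \<Rightarrow> bool) \<Rightarrow> bool" where
  "simple_graph V E \<longleftrightarrow> finite V \<and> (\<forall>x y. E x y \<longrightarrow> x \<in> V \<and> y \<in> V \<and> x \<noteq> y \<and> E y x)"

definition add_twin :: "('a \<Rightarrow> 'a \<Rightarrow> bool) \<Rightarrow> 'a \<Rightarrow> 'a \<Rightarrow> 'a \<Rightarrow> 'a \<Rightarrow> bool" where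
  "add_twin E v v' x y =
     (if x = v' \<and> y = v' then False
      else if x = v' then E v y
      else if y = v' then E x v
      else E x y)"

end

theory Submission
  imports Defs
begin

definition liftb :: "nat \<Rightarrow> (nat \<Rightarrow> real) set \<Rightarrow> real \<Rightarrow> real \<Rightarrow> (nat \<Rightarrow> real) set" where
  "liftb d S p q = {x. x(d:=0) \<in> S \<and> p \<le> x d \<and> x d \<le> q}"

lemma box_set_upd: "box_set d (f(d:=a)) (g(d:=c)) = box_set d f g"
  unfolding box_set_def by auto

lemma box_interior_upd: "box_interior d (f(d:=a)) (g(d:=c)) = box_interior d f g"
  unfolding box_interior_def by auto

lemma box_lift: "box_set (Suc d) lo hi = liftb d (box_set d lo hi) (lo d) (hi d)"
proof (rule set_eqI)
  fix x
  show "x \<in> box_set (Suc d) lo hi \<longleftrightarrow> x \<in> liftb d (box_set d lo hi) (lo d) (hi d)"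
    unfolding box_set_def liftb_def
    by (auto simp: less_Suc_eq)
qed

lemma box_int_lift: "x \<in> box_interior (Suc d) lo hi \<Longrightarrow>
   x(d:=0) \<in> box_interior d lo hi \<and> lo d < x d \<and> x d < hi d"
  unfolding box_interior_def by (auto simp: less_Suc_eq)

lemma lift_inter: "liftb d S p q \<inter> liftb d T r s = liftb d (S \<inter> T) (max p r) (min q s)"
  unfolding liftb_def by auto

lemma lift_empty:
  assumes "S \<subseteq> {x. x d = 0}"
  shows "liftb d S p q = {} \<longleftrightarrow> S = {} \<or> q < p"
proof
  assume h: "liftb d S p q = {}"
  show "S = {} \<or> q < p"
  proof (rule ccontr)
    assume "\<not> (S = {} \<or> q < p)"
    then obtain x where x: "x \<in> S" and pq: "p \<le> q" by auto
    have "x d = 0" using x assms by auto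
    then have "(x(d:=p))(d:=0) = x" by auto
    then have "x(d:=p) \<in> liftb d S p q" using x pq unfolding liftb_def by auto
    then show False using h by auto
  qed
next
  assume "S = {} \<or> q < p"
  then show "liftb d S p q = {}" unfolding liftb_def by auto
qed

lemma facet_lift:
  assumes "orth_facet d S" "1 \<le> d" "p < q"
  shows "orth_facet (Suc d) (liftb d S p q)"
proof -
  obtain c a b where ab: "\<forall>i. 1 \<le> i \<and> i < d \<longrightarrow> a i < b i" and
    S: "S = {x. x 0 = c \<and> (\<forall>i. 1 \<le> i \<and> i < d \<longrightarrow> a i \<le> x i \<and> x i \<le> b i) \<and> (\<forall>i\<ge>d. x i = 0)}"
    using assms(1) unfolding orth_facet_def by blast
  have d0: "d \<noteq> 0" using assms(2) by auto
  have ab': "\<forall>i. 1 \<le> i \<and> i < Suc d \<longrightarrow> (a(d:=p)) i < (b(d:=q)) i"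
    using ab assms(3) by (auto simp: less_Suc_eq)
  have eq: "liftb d S p q = {x. x 0 = c \<and> (\<forall>i. 1 \<le> i \<and> i < Suc d \<longrightarrow> (a(d:=p)) i \<le> x i \<and> x i \<le> (b(d:=q)) i) \<and> (\<forall>i\<ge>Suc d. x i = 0)}"
  proof (rule set_eqI)
    fix x
    show "x \<in> liftb d S p q \<longleftrightarrow> x \<in> {x. x 0 = c \<and> (\<forall>i. 1 \<le> i \<and> i < Suc d \<longrightarrow> (a(d:=p)) i \<le> x i \<and> x i \<le> (b(d:=q)) i) \<and> (\<forall>i\<ge>Suc d. x i = 0)}"
      unfolding liftb_def S using d0
      by (auto simp: less_Suc_eq)
  qed
  show ?thesis unfolding orth_facet_def using ab' eq by blast
qed


lemma restrict_dCBU: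
  assumes "dCBU d (insert v' V) E'" "\<forall>x\<in>V. \<forall>y\<in>V. E' x y = E x y"
  shows "dCBU d V E"
  using assms unfolding dCBU_def by (metis insert_iff)

lemma extend_dCBU:
  assumes sg: "simple_graph V E" and vV: "v \<in> V" and v'V: "v' \<notin> V" and D: "dCBU d V E"
  shows "dCBU (Suc d) (insert v' V) (add_twin E v v')"
proof -
  obtain lo hi where d1: "1 \<le> d" and pos: "\<forall>u\<in>V. \<forall>i<d. lo u i < hi u i" and
    rep: "\<forall>u\<in>V. \<forall>w\<in>V. u \<noteq> w \<longrightarrow>
        box_interior d (lo u) (hi u) \<inter> box_interior d (lo w) (hi w) = {} \<and>
        (E u w \<longleftrightarrow> box_set d (lo u) (hi u) \<inter> box_set d (lo w) (hi w) \<noteq> {}) \<and>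
        (box_set d (lo u) (hi u) \<inter> box_set d (lo w) (hi w) \<noteq> {} \<longrightarrow>
           orth_facet d (box_set d (lo u) (hi u) \<inter> box_set d (lo w) (hi w)))"
    using D unfolding dCBU_def by blast
  have vv': "v \<noteq> v'" using vV v'V by auto
  define b where "b u = (if u = v' then v else u)" for u
  define L :: "'a \<Rightarrow> real" where "L u = (if u = v' then 2/3 else 0)" for u
  define H :: "'a \<Rightarrow> real" where "H u = (if u = v then 1/3 else 1)" for u
  define lo' where "lo' u = (lo (b u))(d := L u)" for u
  define hi' where "hi' u = (hi (b u))(d := H u)" for u
  have bV: "b u \<in> V" if "u \<in> insert v' V" for u using that vV by (auto simp: b_def)
  have LH: "L u < H u" for u using vv' by (auto simp: L_def H_def)
  have pos': "\<forall>u\<in>insert v' V. \<forall>i<Suc d. lo' u i < hi' u i"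
  proof (intro ballI allI impI)
    fix u i assume u: "u \<in> insert v' V" and i: "i < Suc d"
    show "lo' u i < hi' u i"
    proof (cases "i = d")
      case True then show ?thesis using LH by (simp add: lo'_def hi'_def)
    next
      case False then have "i < d" using i by auto
      then show ?thesis using pos bV[OF u] False by (simp add: lo'_def hi'_def)
    qed
  qed
  have twin: "add_twin E v v' u w = E (b u) (b w)" if "u \<noteq> w" for u w
    using that by (auto simp: add_twin_def b_def)
  have Evv: "\<not> E x x" for x using sg unfolding simple_graph_def by blast
  have bsub: "box_set d f g \<inter> box_set d f2 g2 \<subseteq> {x. x d = 0}" for f g f2 g2
    unfolding box_set_def by auto
  have rep': "box_interior (Suc d) (lo' u) (hi' u) \<inter> box_interior (Suc d) (lo' w) (hi' w) = {} \<and>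
        (add_twin E v v' u w \<longleftrightarrow> box_set (Suc d) (lo' u) (hi' u) \<inter> box_set (Suc d) (lo' w) (hi' w) \<noteq> {}) \<and>
        (box_set (Suc d) (lo' u) (hi' u) \<inter> box_set (Suc d) (lo' w) (hi' w) \<noteq> {} \<longrightarrow>
           orth_facet (Suc d) (box_set (Suc d) (lo' u) (hi' u) \<inter> box_set (Suc d) (lo' w) (hi' w)))"
    if u: "u \<in> insert v' V" and w: "w \<in> insert v' V" and uw: "u \<noteq> w" for u w
  proof -
    have inter: "box_set (Suc d) (lo' u) (hi' u) \<inter> box_set (Suc d) (lo' w) (hi' w)
       = liftb d (box_set d (lo (b u)) (hi (b u)) \<inter> box_set d (lo (b w)) (hi (b w))) (max (L u) (L w)) (min (H u) (H w))"
      unfolding box_lift lift_inter by (simp add: lo'_def hi'_def box_set_upd)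
    show ?thesis
    proof (cases "b u = b w")
      case True
      then have uw2: "(u = v \<and> w = v') \<or> (u = v' \<and> w = v)" using uw u w v'V
        by (auto simp: b_def split: if_splits)
      then have lt: "min (H u) (H w) < max (L u) (L w)" using vv' by (auto simp: L_def H_def)
      have e: "box_set (Suc d) (lo' u) (hi' u) \<inter> box_set (Suc d) (lo' w) (hi' w) = {}"
        unfolding inter using lift_empty[OF bsub] lt by blast
      have i: "box_interior (Suc d) (lo' u) (hi' u) \<inter> box_interior (Suc d) (lo' w) (hi' w) = {}"
      proof (rule ccontr)
        assume "\<not> ?thesis"
        then obtain x where "x \<in> box_interior (Suc d) (lo' u) (hi' u)" "x \<in> box_interior (Suc d) (lo' w) (hi' w)" by blast
        from this[THEN box_int_lift] have "L u < x d" "x d < H u" "L w < x d" "x d < H w"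
          by (auto simp: lo'_def hi'_def)
        then show False using uw2 vv' by (auto simp: L_def H_def)
      qed
      have "\<not> add_twin E v v' u w" using twin[OF uw] True Evv by simp
      then show ?thesis using e i by simp
    next
      case False
      have buw: "b u \<in> V" "b w \<in> V" using bV u w by auto
      note R = rep[rule_format, OF buw False]
      have lt: "max (L u) (L w) < min (H u) (H w)"
        using False vv' by (auto simp: L_def H_def b_def split: if_splits)
      have i: "box_interior (Suc d) (lo' u) (hi' u) \<inter> box_interior (Suc d) (lo' w) (hi' w) = {}"
      proof (rule ccontr)
        assume "\<not> ?thesis"
        then obtain x where "x \<in> box_interior (Suc d) (lo' u) (hi' u)" "x \<in> box_interior (Suc d) (lo' w) (hi' w)" by blast
        from this[THEN box_int_lift] have "x(d:=0) \<in> box_interior d (lo (b u)) (hi (b u))"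
           "x(d:=0) \<in> box_interior d (lo (b w)) (hi (b w))"
          by (auto simp: lo'_def hi'_def box_interior_upd)
        then show False using R by blast
      qed
      have ne: "box_set (Suc d) (lo' u) (hi' u) \<inter> box_set (Suc d) (lo' w) (hi' w) \<noteq> {} \<longleftrightarrow>
          box_set d (lo (b u)) (hi (b u)) \<inter> box_set d (lo (b w)) (hi (b w)) \<noteq> {}"
        unfolding inter using lift_empty[OF bsub] lt by auto
      show ?thesis using i ne R twin[OF uw] facet_lift[OF _ d1 lt] inter by auto
    qed
  qed
  have "1 \<le> Suc d" by simp
  then show ?thesis unfolding dCBU_def
    apply -
    apply (rule conjI, assumption)
    apply (rule exI[of _ lo'], rule exI[of _ hi'])
    using pos' rep' by blast
qed

theorem mainTheorem10:
  fixes V :: "'a set" and E :: "'a \<Rightarrow> 'a \<Rightarrow> bool" and v v' :: 'a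
  assumes "simple_graph V E" and "v \<in> V" and "v' \<notin> V"
  shows "(CBU V E \<longleftrightarrow> CBU (insert v' V) (add_twin E v v'))
         \<and> (\<forall>d. dCBU d V E \<longrightarrow> dCBU (d + 1) (insert v' V) (add_twin E v v'))"
proof -
  have ext: "\<forall>d. dCBU d V E \<longrightarrow> dCBU (d + 1) (insert v' V) (add_twin E v v')"
    using extend_dCBU[OF assms] by simp
  have agree: "\<forall>x\<in>V. \<forall>y\<in>V. add_twin E v v' x y = E x y"
    using assms(3) by (auto simp: add_twin_def)
  have "CBU V E \<longleftrightarrow> CBU (insert v' V) (add_twin E v v')"
  proof
    assume "CBU V E"
    then obtain d where "d \<ge> 1" "dCBU d V E" unfolding CBU_def by blast
    then show "CBU (insert v' V) (add_twin E v v')" unfolding CBU_def using ext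
      by (metis le_add1 order_trans)
  next
    assume "CBU (insert v' V) (add_twin E v v')"
    then obtain d where "d \<ge> 1" "dCBU d (insert v' V) (add_twin E v v')" unfolding CBU_def by blast
    then show "CBU V E" unfolding CBU_def using restrict_dCBU[OF _ agree] by blast
  qed
  then show ?thesis using ext by blast
qed

end
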